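(* In the social learning model, assume there exist $c>0$, $k>0$ and $x_0>0$ such that $G_-(-x)=c\,x^{-k}$ and $G_+(x)=1-c\,x^{-k}$ for all $x>x_0$. Then there exists $X>0$ such that for all $x\ge X$, $$|x+D_-(x)|\le x\qquad\text{and}\qquad |{-x}+D_+(-x)|\le x.$$ Equivalently, for every $t$, if $|\ell_t|\ge X$ and the action $a_t$ disagrees with the sign of $\ell_t$ (i.e., $a_t\ne a_{t-1}$, where $\ell_t$ has the sign of $a_{t-1}$), then $|\ell_{t+1}|\le|\ell_t|$.
   Context: Social learning model. A state $\theta\in\{-1,+1\}$ is drawn with $\mathbb{P}(\theta=+1)=\mathbb{P}(\theta=-1)=1/2$. Agents $t=1,2,\dots$ receive private signals $s_t\in\mathbb{R}$ that are i.i.d. conditionally on $\theta$, with CDF $F_+$ if $\theta=+1$ and $F_-$ if $\theta=-1$; $F_+$ and $F_-$ are mutually absolutely continuous. Let $L_t=\log\frac{\mathbb{P}(\theta=+1\mid s_t)}{\mathbb{P}(\theta=-1\mid s_t)}$ be the private log-likelihood ratio, and let $G_+$, $G_-$ denote the CDFs of $L_t$ conditional on $\theta=+1$, $\theta=-1$ respectively. Signals are assumed unbounded: for every $M\in\mathbb{R}$, $\mathbb{P}(L_t>M)>0$ and $\mathbb{P}(L_t<-M)>0$. Agent $t$ observes $a_1,\dots,a_{t-1}$ and her own signal and chooses $a_t\in\{-1,+1\}$ (utility $1$ if $a_t=\theta$, else $0$). The public belief is $\mu_t=\mathbb{P}(\theta=+1\mid a_1,\dots,a_{t-1})$ and $\ell_t=\log\frac{\mu_t}{1-\mu_t}$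 (so $\ell_1=0$). In equilibrium $a_t=+1$ iff $\ell_t+L_t>0$, and otherwise $a_t=-1$. Consequently $\ell_{t+1}=\ell_t+D_+(\ell_t)$ if $a_t=+1$ and $\ell_{t+1}=\ell_t+D_-(\ell_t)$ if $a_t=-1$, where $D_+(x)=\log\frac{1-G_+(-x)}{1-G_-(-x)}$ and $D_-(x)=\log\frac{G_+(-x)}{G_-(-x)}$. We write $\mathbb{P}_+(\cdot)=\mathbb{P}(\cdot\mid\theta=+1)$ and $\mathbb{E}_+$ for the corresponding expectation. *)

theory Defs
  imports "HOL-Probability.Probability"
begin

text \<open>Fp, Fm are the conditional laws of the private signal
  s in the real line given theta = +1 and theta = -1 respectively.
  With the uniform prior, the posterior odds P(theta=+1|s)/P(theta=-1|s) equal the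
  Radon-Nikodym derivative dFp/dFm at s (RN_deriv Fm Fp is the density of Fp
  with respect to Fm).\<close>

definition signal_model :: "real measure \<Rightarrow> real measure \<Rightarrow> bool" where
  "signal_model Fp Fm \<longleftrightarrow>
     prob_space Fp \<and> prob_space Fm \<and>
     sets Fp = sets borel \<and> sets Fm = sets borel \<and>
     absolutely_continuous Fp Fm \<and> absolutely_continuous Fm Fp"

definition LLR :: "real measure \<Rightarrow> real measure \<Rightarrow> real \<Rightarrow> real" where
  "LLR Fp Fm s = ln (enn2real (RN_deriv Fm Fp s))"

definition Gp :: "real measure \<Rightarrow> real measure \<Rightarrow> real \<Rightarrow> real" where
  "Gp Fp Fm x = measure Fp {s \<in> space Fp. LLR Fp Fm s \<le> x}"

definition Gm :: "real measure \<Rightarrow> real measure \<Rightarrow> real \<Rightarrow> real" where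
  "Gm Fp Fm x = measure Fm {s \<in> space Fm. LLR Fp Fm s \<le> x}"

text \<open>Unbounded signals: P(L > M) > 0 and P(L < -M) > 0 for all M, where P is
  the unconditional law (uniform prior over the state).\<close>
definition unbounded_signals :: "real measure \<Rightarrow> real measure \<Rightarrow> bool" where
  "unbounded_signals Fp Fm \<longleftrightarrow>
     (\<forall>M::real.
        (measure Fp {s \<in> space Fp. LLR Fp Fm s > M} + measure Fm {s \<in> space Fm. LLR Fp Fm s > M}) / 2 > 0 \<and>
        (measure Fp {s \<in> space Fp. LLR Fp Fm s < -M} + measure Fm {s \<in> space Fm. LLR Fp Fm s < -M}) / 2 > 0)"

definition Dplus :: "real measure \<Rightarrow> real measure \<Rightarrow> real \<Rightarrow> real" where
  "Dplus Fp Fm x = ln ((1 - Gp Fp Fm (-x)) / (1 - Gm Fp Fm (-x)))"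

definition Dminus :: "real measure \<Rightarrow> real measure \<Rightarrow> real \<Rightarrow> real" where
  "Dminus Fp Fm x = ln (Gp Fp Fm (-x) / Gm Fp Fm (-x))"

end

theory Submission
  imports Defs
begin

lemma sm_facts:
  assumes "signal_model Fp Fm"
  shows "prob_space Fp" "prob_space Fm" "sets Fp = sets borel" "sets Fm = sets borel"
    "space Fp = UNIV" "space Fm = UNIV"
proof -
  show p: "prob_space Fp" "prob_space Fm" and s: "sets Fp = sets borel" "sets Fm = sets borel"
    using assms by (auto simp: signal_model_def)
  show "space Fp = UNIV" "space Fm = UNIV" using s sets_eq_imp_space_eq by (metis space_borel)+
qed
lemma sm_dens:
  assumes "signal_model Fp Fm"
  shows "density Fm (RN_deriv Fm Fp) = Fp"
proof -
  have p: "prob_space Fm" using sm_facts[OF assms] by simp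
  have "sigma_finite_measure Fm" using p by (simp add: prob_space_imp_sigma_finite)
  then show "density Fm (RN_deriv Fm Fp) = Fp"
    using assms sm_facts[OF assms] by (intro sigma_finite_measure.density_RN_deriv) (auto simp: signal_model_def)
qed

lemma LLR_meas:
  assumes "signal_model Fp Fm"
  shows "LLR Fp Fm \<in> borel_measurable borel"
proof -
  have "RN_deriv Fm Fp \<in> borel_measurable Fm" by (rule borel_measurable_RN_deriv)
  then have "RN_deriv Fm Fp \<in> borel_measurable borel"
    using sm_facts(4)[OF assms] measurable_cong_sets by blast
  then show ?thesis unfolding LLR_def[abs_def] by (intro borel_measurable_ln borel_measurable_enn2real)
qed

lemma key_val:
  assumes "LLR Fp Fm s \<noteq> 0"
  shows "RN_deriv Fm Fp s = ennreal (exp (LLR Fp Fm s))"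
proof -
  let ?r = "enn2real (RN_deriv Fm Fp s)"
  have "?r \<noteq> 0" using assms by (auto simp: LLR_def)
  then have r: "?r > 0" using enn2real_nonneg[of "RN_deriv Fm Fp s"] by linarith
  then have "RN_deriv Fm Fp s \<noteq> \<infinity>" by auto
  then have "RN_deriv Fm Fp s = ennreal ?r" by (simp add: less_top)
  then show ?thesis using r by (simp add: LLR_def)
qed
lemma emeas_Fp:
  assumes "signal_model Fp Fm" "S \<in> sets borel"
  shows "emeasure Fp S = (\<integral>\<^sup>+ s. RN_deriv Fm Fp s * indicator S s \<partial>Fm)"
proof -
  have "emeasure Fp S = emeasure (density Fm (RN_deriv Fm Fp)) S" using sm_dens[OF assms(1)] by simp
  also have "\<dots> = (\<integral>\<^sup>+ s. RN_deriv Fm Fp s * indicator S s \<partial>Fm)"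
    using assms sm_facts(4)[OF assms(1)] by (intro emeasure_density) auto
  finally show ?thesis .
qed

lemma emm:
  assumes "signal_model Fp Fm"
  shows "emeasure Fp S = ennreal (measure Fp S)" "emeasure Fm S = ennreal (measure Fm S)"
  using sm_facts(1,2)[OF assms] by (auto intro: finite_measure.emeasure_eq_measure prob_space.finite_measure)

lemma lower_b:
  assumes "signal_model Fp Fm" "S \<in> sets borel" "\<forall>s\<in>S. a < LLR Fp Fm s \<and> LLR Fp Fm s \<noteq> 0"
  shows "exp a * measure Fm S \<le> measure Fp S"
proof -
  have "ennreal (exp a) * emeasure Fm S = (\<integral>\<^sup>+ s. ennreal (exp a) * indicator S s \<partial>Fm)"
    using assms(2) sm_facts(4)[OF assms(1)] by (simp add: nn_integral_cmult_indicator)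
  also have "\<dots> \<le> (\<integral>\<^sup>+ s. RN_deriv Fm Fp s * indicator S s \<partial>Fm)"
  proof (intro nn_integral_mono)
    fix s show "ennreal (exp a) * indicator S s \<le> RN_deriv Fm Fp s * indicator S s"
    proof (cases "s \<in> S")
      case True then show ?thesis using assms(3) key_val[of Fp Fm s] by (auto simp: ennreal_leI)
    qed simp
  qed
  also have "\<dots> = emeasure Fp S" using emeas_Fp[OF assms(1,2)] by simp
  finally have "ennreal (exp a) * ennreal (measure Fm S) \<le> ennreal (measure Fp S)" 
    using emm[OF assms(1)] by metis
  then show ?thesis by (simp add: ennreal_mult'[symmetric])
qed

lemma upper_b:
  assumes "signal_model Fp Fm" "S \<in> sets borel" "\<forall>s\<in>S. LLR Fp Fm s \<le> b \<and> LLR Fp Fm s \<noteq> 0"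
  shows "measure Fp S \<le> exp b * measure Fm S"
proof -
  have "emeasure Fp S = (\<integral>\<^sup>+ s. RN_deriv Fm Fp s * indicator S s \<partial>Fm)" using emeas_Fp[OF assms(1,2)] by simp
  also have "\<dots> \<le> (\<integral>\<^sup>+ s. ennreal (exp b) * indicator S s \<partial>Fm)"
  proof (intro nn_integral_mono)
    fix s show "RN_deriv Fm Fp s * indicator S s \<le> ennreal (exp b) * indicator S s"
    proof (cases "s \<in> S")
      case True then show ?thesis using assms(3) key_val[of Fp Fm s] by (auto simp: ennreal_leI)
    qed simp
  qed
  also have "\<dots> = ennreal (exp b) * emeasure Fm S"
    using assms(2) sm_facts(4)[OF assms(1)] by (simp add: nn_integral_cmult_indicator)
  finally have "ennreal (measure Fp S) \<le> ennreal (exp b) * ennreal (measure Fm S)" 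
    using emm[OF assms(1)] by metis
  then show ?thesis by (simp add: ennreal_mult'[symmetric])
qed
lemma ln_bounds1:
  fixes p g q x :: real
  assumes "0 < p" "p \<le> g" "exp (-(3/2*x)) * g * q \<le> p" "0 < q" "x \<ge> -2 * ln q" "x > 0"
  shows "\<bar>x + ln (p/g)\<bar> \<le> x"
proof -
  have g: "g > 0" using assms by linarith
  have "ln (p/g) \<le> 0" using assms g by (simp add: divide_le_eq_1)
  moreover have "exp (-(3/2*x)) * q \<le> p/g" using assms g by (simp add: field_simps)
  then have "ln (exp (-(3/2*x)) * q) \<le> ln (p/g)" using assms g by (subst ln_le_cancel_iff) auto
  then have "-(3/2*x) + ln q \<le> ln (p/g)" using assms by (simp add: ln_mult)
  ultimately show ?thesis using assms by linarith
qed

lemma ln_bounds2: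
  fixes p m q x :: real
  assumes "0 < m" "exp x * m \<le> p" "p * q \<le> exp (3/2*x) * m" "0 < q" "x \<ge> -2 * ln q" "x > 0"
  shows "\<bar>-x + ln (p/m)\<bar> \<le> x"
proof -
  have p: "p > 0" using assms by (smt (verit) exp_gt_zero mult_pos_pos)
  have "exp x \<le> p/m" using assms by (simp add: field_simps)
  then have "ln (exp x) \<le> ln (p/m)" using assms p by (subst ln_le_cancel_iff) auto
  then have 1: "x \<le> ln (p/m)" by simp
  have "p/m \<le> exp (3/2*x) / q" using assms p by (simp add: field_simps)
  then have "ln (p/m) \<le> ln (exp (3/2*x) / q)" using assms p by (subst ln_le_cancel_iff) auto
  then have "ln (p/m) \<le> 3/2*x - ln q" using assms by (simp add: ln_div)
  then show ?thesis using 1 assms by linarith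
qed
theorem lemma10:
  fixes Fp Fm :: "real measure" and c k x0 :: real
  assumes "signal_model Fp Fm"
    and "unbounded_signals Fp Fm"
    and "c > 0" and "k > 0" and "x0 > 0"
    and "\<forall>x. x > x0 \<longrightarrow> Gm Fp Fm (-x) = c * x powr (-k) \<and> Gp Fp Fm x = 1 - c * x powr (-k)"
  shows "\<exists>X>0. \<forall>x\<ge>X. \<bar>x + Dminus Fp Fm x\<bar> \<le> x \<and> \<bar>-x + Dplus Fp Fm (-x)\<bar> \<le> x"
proof -
  note sm = assms(1)
  define L where "L = LLR Fp Fm"
  define q where "q = 1 - (3/2::real) powr (-k)"
  have "(3/2::real) powr 0 < (3/2) powr k" using assms(4) by (intro powr_less_mono) auto
  then have "(3/2::real) powr k > 1" by simp
  then have q: "0 < q" unfolding q_def by (simp add: powr_minus inverse_less_1_iff)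
  have Lm: "L \<in> borel_measurable borel" using LLR_meas[OF sm] L_def by simp
  have spP: "space Fp = UNIV" and spM: "space Fm = UNIV" using sm_facts[OF sm] by auto
  have setsP: "sets Fp = sets borel" and setsM: "sets Fm = sets borel" using sm_facts[OF sm] by auto
  have finP: "finite_measure Fp" and finM: "finite_measure Fm"
    using sm_facts[OF sm] by (auto intro: prob_space.finite_measure)
  have meas: "{s. L s \<le> a} \<in> sets borel" "{s. L s > a} \<in> sets borel" for a
    using Lm by measurable
  have GpL: "Gp Fp Fm a = measure Fp {s. L s \<le> a}" for a unfolding Gp_def L_def spP by simp
  have GmL: "Gm Fp Fm a = measure Fm {s. L s \<le> a}" for a unfolding Gm_def L_def spM by simp
  have cP: "1 - Gp Fp Fm a = measure Fp {s. L s > a}" for a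
  proof -
    have "measure Fp (space Fp - {s. L s \<le> a}) = 1 - measure Fp {s. L s \<le> a}"
      using sm_facts(1)[OF sm] meas setsP by (intro prob_space.prob_compl) auto
    moreover have "space Fp - {s. L s \<le> a} = {s. L s > a}" using spP by auto
    ultimately show ?thesis using GpL by simp
  qed
  have cM: "1 - Gm Fp Fm a = measure Fm {s. L s > a}" for a
  proof -
    have "measure Fm (space Fm - {s. L s \<le> a}) = 1 - measure Fm {s. L s \<le> a}"
      using sm_facts(2)[OF sm] meas setsM by (intro prob_space.prob_compl) auto
    moreover have "space Fm - {s. L s \<le> a} = {s. L s > a}" using spM by auto
    ultimately show ?thesis using GmL by simp
  qed
  define X where "X = max (x0 + 1) (-2 * ln q)"
  have "X > 0" using assms(5) unfolding X_def by linarith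
  moreover have "\<bar>x + Dminus Fp Fm x\<bar> \<le> x \<and> \<bar>-x + Dplus Fp Fm (-x)\<bar> \<le> x" if x: "x \<ge> X" for x
  proof
    have xx0: "x > x0" and xq: "x \<ge> -2 * ln q" using x unfolding X_def by auto
    have xp: "x > 0" using xx0 assms(5) by linarith
    have x2: "3/2*x > x0" using xx0 xp by linarith
    have pw: "(3/2*x) powr (-k) = (3/2) powr (-k) * x powr (-k)" using xp powr_mult[of "3/2" x "-k"] by simp
    have cq: "c * x powr (-k) - c * (3/2*x) powr (-k) = c * x powr (-k) * q"
      unfolding pw q_def by (simp add: algebra_simps)
    have cxp: "c * x powr (-k) > 0" using assms(3) xp by simp
    define A where "A = {s. L s \<le> -x}"
    define B where "B = {s. L s \<le> -(3/2*x)}"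
    have AB: "B \<subseteq> A" "A \<in> sets borel" "B \<in> sets borel" using xp meas unfolding A_def B_def by auto
    have mA: "measure Fm A = c * x powr (-k)" using assms(6) xx0 GmL A_def by auto
    have mB: "measure Fm B = c * (3/2*x) powr (-k)" using assms(6)[rule_format, OF x2] GmL B_def by auto
    have mAB: "measure Fm (A - B) = c * x powr (-k) * q"
      using finite_measure.finite_measure_Diff[OF finM, of A B] AB setsM mA mB cq by auto
    have "exp (-(3/2*x)) * measure Fm (A - B) \<le> measure Fp (A - B)"
      using AB xp by (intro lower_b[OF sm]) (auto simp: A_def B_def L_def)
    moreover have "measure Fp (A - B) \<le> measure Fp A"
      using AB setsP by (intro finite_measure.finite_measure_mono[OF finP]) auto
    ultimately have lo1: "exp (-(3/2*x)) * (c * x powr (-k)) * q \<le> measure Fp A" using mAB by simp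
    have "measure Fp A \<le> exp (-x) * measure Fm A"
      using AB xp by (intro upper_b[OF sm]) (auto simp: A_def L_def)
    moreover have "exp (-x) * measure Fm A \<le> measure Fm A" proof -
      have "exp (-x) \<le> 1" using xp by simp
      from mult_right_mono[OF this less_imp_le[OF cxp]] show ?thesis using mA by simp
    qed
    ultimately have up1: "measure Fp A \<le> c * x powr (-k)" using mA by simp
    have "0 < exp (-(3/2*x)) * (c * x powr (-k)) * q" using q cxp by simp
    then have pos1: "0 < measure Fp A" using lo1 by linarith
    have "Dminus Fp Fm x = ln (measure Fp A / (c * x powr (-k)))"
      unfolding Dminus_def GpL GmL A_def[symmetric] mA by simp
    then show "\<bar>x + Dminus Fp Fm x\<bar> \<le> x"
      using ln_bounds1[OF pos1 up1 lo1 q xq xp] by simp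
  next
    have xx0: "x > x0" and xq: "x \<ge> -2 * ln q" using x unfolding X_def by auto
    have xp: "x > 0" using xx0 assms(5) by linarith
    have x2: "3/2*x > x0" using xx0 xp by linarith
    have pw: "(3/2*x) powr (-k) = (3/2) powr (-k) * x powr (-k)" using xp powr_mult[of "3/2" x "-k"] by simp
    have cq: "c * x powr (-k) - c * (3/2*x) powr (-k) = c * x powr (-k) * q"
      unfolding pw q_def by (simp add: algebra_simps)
    have cxp: "c * x powr (-k) > 0" using assms(3) xp by simp
    define C where "C = {s. L s > x}"
    define E where "E = {s. L s > 3/2*x}"
    have CE: "E \<subseteq> C" "C \<in> sets borel" "E \<in> sets borel"
      using xp meas(2)[of x] meas(2)[of "3/2*x"] unfolding C_def E_def by auto
    have mC: "measure Fp C = c * x powr (-k)" using assms(6) xx0 cP[of x] unfolding C_def by simp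
    have mE: "measure Fp E = c * (3/2*x) powr (-k)" using assms(6)[rule_format, OF x2] cP[of "3/2*x"] unfolding E_def by simp
    have mCE: "measure Fp (C - E) = c * x powr (-k) * q"
      using finite_measure.finite_measure_Diff[OF finP, of C E] CE setsP mC mE cq by auto
    have lo2: "exp x * measure Fm C \<le> measure Fp C"
      using CE xp by (intro lower_b[OF sm]) (auto simp: C_def L_def)
    have "measure Fp (C - E) \<le> exp (3/2*x) * measure Fm (C - E)"
      using CE xp by (intro upper_b[OF sm]) (auto simp: C_def E_def L_def)
    moreover have "measure Fm (C - E) \<le> measure Fm C"
      using CE setsM by (intro finite_measure.finite_measure_mono[OF finM]) auto
    moreover have "exp (3/2*x) * measure Fm (C - E) \<le> exp (3/2*x) * measure Fm C"
      by (rule mult_left_mono) (use calculation in simp_all)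
    ultimately have "measure Fp (C - E) \<le> exp (3/2*x) * measure Fm C" by linarith
    then have up2: "measure Fp C * q \<le> exp (3/2*x) * measure Fm C"
      using mCE mC by simp
    have "0 < measure Fp C * q" using mC cxp q by simp
    then have "0 < exp (3/2*x) * measure Fm C" using up2 by linarith
    then have pos2: "0 < measure Fm C" by (simp add: zero_less_mult_iff)
    have "Dplus Fp Fm (-x) = ln (measure Fp C / measure Fm C)"
      unfolding Dplus_def minus_minus cP cM C_def by simp
    then show "\<bar>-x + Dplus Fp Fm (-x)\<bar> \<le> x"
      using ln_bounds2[OF pos2 lo2 up2 q xq xp] by simp
  qed
  ultimately show ?thesis by blast
qed
end
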